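(* Let $\mathcal{T}^X$ be a stable projective tree of spheres marked by a finite set $X$, let $v$ and $v'$ be two distinct internal vertices of $T^X$, and let $(x_n)_n$ be a sequence of spheres marked by $X$ converging to $\mathcal{T}^X$ via isomorphisms $(\phi_n)_n$. Then the sequence of isomorphisms $\phi_{n,v'}\circ\phi_{n,v}^{-1}:\mathbb{S}_v\to\mathbb{S}_{v'}$ converges locally uniformly on $\mathbb{S}_v\setminus\{i_v(v')\}$ to the constant map with value $i_{v'}(v)$.
   Context: A tree is a finite connected graph without cycles (vertices $V$, edges $2$-element subsets of $V$, $E_v$ the set of edges containing $v$); leaves are valence-$1$ vertices, others internal; stable means every internal vertex has valence $\ge3$. For a vertex $v$ and $e\in E_v$, $B_v(e)$ is the connected component of the tree minus $v$ containing $e$. A projective tree of spheres $\mathcal{T}^X$ marked by a finite set $X$ ($\ge3$ elements) consists of a tree $T^X$ whose set of leaves is $X$ and, for each internal vertex $v$, a sphere $\mathbb{S}_v$ with a projective (complex) structure (a class of homeomorphisms to $\hat{\mathbb{C}}$ modulo Möbius transformations) and an injection $i_v:E_v\to\mathbb{S}_v$; for a vertex $v'\ne v$, $i_v(v'):=i_v(e)$ where $v'\in B_v(e)$; $a_v:X\to\mathbb{S}_v$ is $a_v(x)=i_v(x)$. A sphere marked by $X$ is an injection $x:X\to\hat{\mathbb{C}}$. A sequence $x_n$ converges to $\mathcal{T}^X$ via $(\phi_n)$ if for every internal vertex $v$ there are projective isomorphisms $\phi_{n,v}:\hat{\mathbb{C}}\to\mathbb{S}_v$ with $\phi_{n,v}\circ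 x_n\to a_v$ pointwise on $X$. *)

theory Defs
  imports Complex_Main
begin

text \<open>The Riemann sphere is modelled as complex option, None being the point at infinity.\<close>
type_synonym ecomplex = "complex option"

fun cdist :: "ecomplex \<Rightarrow> ecomplex \<Rightarrow> real" where
  "cdist (Some z) (Some w) = 2 * cmod (z - w) / sqrt ((1 + (cmod z)\<^sup>2) * (1 + (cmod w)\<^sup>2))"
| "cdist (Some z) None = 2 / sqrt (1 + (cmod z)\<^sup>2)"
| "cdist None (Some w) = 2 / sqrt (1 + (cmod w)\<^sup>2)"
| "cdist None None = 0"

definition moeb :: "complex \<Rightarrow> complex \<Rightarrow> complex \<Rightarrow> complex \<Rightarrow> ecomplex \<Rightarrow> ecomplex" where
  "moeb a b c d p = (case p of
      None \<Rightarrow> (if c = 0 then None else Some (a / c))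
    | Some z \<Rightarrow> (if c * z + d = 0 then None else Some ((a * z + b) / (c * z + d))))"

definition is_moebius :: "(ecomplex \<Rightarrow> ecomplex) \<Rightarrow> bool" where
  "is_moebius f \<longleftrightarrow> (\<exists>a b c d. a * d - b * c \<noteq> 0 \<and> f = moeb a b c d)"

definition conv_sphere :: "(nat \<Rightarrow> ecomplex) \<Rightarrow> ecomplex \<Rightarrow> bool" where
  "conv_sphere s l \<longleftrightarrow> (\<forall>e>0. \<exists>N. \<forall>n\<ge>N. cdist (s n) l < e)"

definition loc_unif_conv_const ::
    "(nat \<Rightarrow> ecomplex \<Rightarrow> ecomplex) \<Rightarrow> ecomplex set \<Rightarrow> ecomplex \<Rightarrow> bool" where
  "loc_unif_conv_const F U c \<longleftrightarrow>
     (\<forall>z\<in>U. \<exists>r>0. \<forall>e>0. \<exists>N. \<forall>n\<ge>N. \<forall>w\<in>U. cdist w z < r \<longrightarrow> cdist (F n w) c < e)"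

definition edge_rel :: "'v set set \<Rightarrow> ('v \<times> 'v) set" where
  "edge_rel E = {(a, b). {a, b} \<in> E}"

definition has_cycle :: "'v set set \<Rightarrow> bool" where
  "has_cycle E \<longleftrightarrow> (\<exists>vs. length vs \<ge> 3 \<and> distinct vs \<and>
       (\<forall>k < length vs. {vs ! k, vs ! ((k + 1) mod length vs)} \<in> E))"

definition is_tree :: "'v set \<Rightarrow> 'v set set \<Rightarrow> bool" where
  "is_tree V E \<longleftrightarrow> finite V \<and> V \<noteq> {} \<and>
     (\<forall>e\<in>E. \<exists>a b. a \<noteq> b \<and> a \<in> V \<and> b \<in> V \<and> e = {a, b}) \<and>
     (\<forall>a\<in>V. \<forall>b\<in>V. (a, b) \<in> (edge_rel E)\<^sup>*) \<and>
     \<not> has_cycle E"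

definition edges_at :: "'v set set \<Rightarrow> 'v \<Rightarrow> 'v set set" where
  "edges_at E v = {e \<in> E. v \<in> e}"

definition valence :: "'v set set \<Rightarrow> 'v \<Rightarrow> nat" where
  "valence E v = card (edges_at E v)"

definition leaves :: "'v set \<Rightarrow> 'v set set \<Rightarrow> 'v set" where
  "leaves V E = {v \<in> V. valence E v = 1}"

definition internal :: "'v set \<Rightarrow> 'v set set \<Rightarrow> 'v set" where
  "internal V E = V - leaves V E"

definition stable_tree :: "'v set \<Rightarrow> 'v set set \<Rightarrow> bool" where
  "stable_tree V E \<longleftrightarrow> (\<forall>v\<in>internal V E. valence E v \<ge> 3)"

text \<open>B_v(e): the connected component of the tree minus v containing the edge e
  (its vertex set, i.e. the vertices reachable from the other endpoint of e avoiding v).\<close>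
definition branch :: "'v set set \<Rightarrow> 'v \<Rightarrow> 'v set \<Rightarrow> 'v set" where
  "branch E v e = {w. \<exists>u\<in>e. u \<noteq> v \<and>
       (u, w) \<in> (edge_rel {f \<in> E. v \<notin> f})\<^sup>*}"

definition toward :: "'v set set \<Rightarrow> 'v \<Rightarrow> 'v \<Rightarrow> 'v set" where
  "toward E v w = (THE e. e \<in> edges_at E v \<and> w \<in> branch E v e)"

text \<open>Each sphere S_v is identified with the Riemann sphere via a chart of its projective
  structure; i v is the injection of the edges at v into S_v.\<close>
definition proj_tree_of_spheres ::
    "'v set \<Rightarrow> 'v set set \<Rightarrow> 'v set \<Rightarrow> ('v \<Rightarrow> 'v set \<Rightarrow> ecomplex) \<Rightarrow> bool" where
  "proj_tree_of_spheres V E X i \<longleftrightarrow> is_tree V E \<and> leaves V E = X \<and> card X \<ge> 3 \<and>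
     (\<forall>v\<in>internal V E. inj_on (i v) (edges_at E v))"

definition iv :: "'v set set \<Rightarrow> ('v \<Rightarrow> 'v set \<Rightarrow> ecomplex) \<Rightarrow> 'v \<Rightarrow> 'v \<Rightarrow> ecomplex" where
  "iv E i v w = i v (toward E v w)"

definition marked_sphere :: "'v set \<Rightarrow> ('v \<Rightarrow> ecomplex) \<Rightarrow> bool" where
  "marked_sphere X x \<longleftrightarrow> inj_on x X"

definition converges_via ::
    "'v set \<Rightarrow> 'v set set \<Rightarrow> 'v set \<Rightarrow> ('v \<Rightarrow> 'v set \<Rightarrow> ecomplex) \<Rightarrow>
     (nat \<Rightarrow> 'v \<Rightarrow> ecomplex) \<Rightarrow> (nat \<Rightarrow> 'v \<Rightarrow> ecomplex \<Rightarrow> ecomplex) \<Rightarrow> bool" where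
  "converges_via V E X i xs \<phi> \<longleftrightarrow>
     (\<forall>v\<in>internal V E. (\<forall>n. is_moebius (\<phi> n v)) \<and>
        (\<forall>x\<in>X. conv_sphere (\<lambda>n. \<phi> n v (xs n x)) (iv E i v x)))"

end

theory Submission
  imports Defs "HOL-Analysis.Analysis" "HOL-Library.Transitive_Closure_Table"
begin


definition st :: "ecomplex \<Rightarrow> real \<times> real \<times> real" where
  "st p = (case p of None \<Rightarrow> (0,0,1)
     | Some z \<Rightarrow> (2 * Re z / (1 + (cmod z)\<^sup>2), 2 * Im z / (1 + (cmod z)\<^sup>2), ((cmod z)\<^sup>2 - 1) / (1 + (cmod z)\<^sup>2)))"

lemma norm3: "norm ((a::real),(b::real),(c::real)) = sqrt (a\<^sup>2 + b\<^sup>2 + c\<^sup>2)"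
  by (simp add: norm_Pair add.assoc)

lemma sq_lemma1: "a = 1+x\<^sup>2+y\<^sup>2 \<Longrightarrow> b = 1+u\<^sup>2+t\<^sup>2 \<Longrightarrow> (2*x*b - 2*u*a)\<^sup>2 + (2*y*b-2*t*a)\<^sup>2 + ((x\<^sup>2+y\<^sup>2-1)*b - (u\<^sup>2+t\<^sup>2-1)*a)\<^sup>2 = 4*((x-u)\<^sup>2+(y-t)\<^sup>2)*a*b" for x y u t a b :: real
  by algebra
lemma sq_lemma2: "a>0 \<Longrightarrow> b>0 \<Longrightarrow> (P/a - Q/b)\<^sup>2 = (P*b - Q*a)\<^sup>2/(a*b)\<^sup>2" for a b P Q :: real
  by (simp add: field_simps)

lemma cdist_sq_SS: "(cdist (Some z) (Some w))\<^sup>2 = (dist (st (Some z)) (st (Some w)))\<^sup>2"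
proof -
  obtain x y where z: "z = Complex x y" by (cases z)
  obtain u t where w: "w = Complex u t" by (cases w)
  have cz: "(cmod z)\<^sup>2 = x\<^sup>2 + y\<^sup>2" by (simp add: z cmod_def)
  have cw: "(cmod w)\<^sup>2 = u\<^sup>2 + t\<^sup>2" by (simp add: w cmod_def)
  have czw: "(cmod (z - w))\<^sup>2 = (x-u)\<^sup>2 + (y-t)\<^sup>2" by (simp add: z w cmod_def)
  define a where "a = 1 + x\<^sup>2 + y\<^sup>2"
  define b where "b = 1 + u\<^sup>2 + t\<^sup>2"
  have A: "a > 0" "b > 0" unfolding a_def b_def by (simp_all add: add_pos_nonneg)
  have "(cdist (Some z) (Some w))\<^sup>2 = 4 * ((x-u)\<^sup>2 + (y-t)\<^sup>2) / (a * b)"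
    using A by (simp add: power_divide power_mult_distrib czw cz cw a_def b_def add.assoc)
  also have "\<dots> = (4 * ((x-u)\<^sup>2 + (y-t)\<^sup>2) * a * b) / (a*b)\<^sup>2"
    using A by (simp add: power2_eq_square)
  also have "\<dots> = ((2*x*b - 2*u*a)\<^sup>2 + (2*y*b-2*t*a)\<^sup>2 + ((x\<^sup>2+y\<^sup>2-1)*b - (u\<^sup>2+t\<^sup>2-1)*a)\<^sup>2) / (a*b)\<^sup>2"
    by (simp add: sq_lemma1 a_def b_def)
  also have "\<dots> = (2*x/a - 2*u/b)\<^sup>2 + (2*y/a-2*t/b)\<^sup>2 + ((x\<^sup>2+y\<^sup>2-1)/a - (u\<^sup>2+t\<^sup>2-1)/b)\<^sup>2"
    using A by (simp add: sq_lemma2 add_divide_distrib)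
  also have "\<dots> = (dist (st (Some z)) (st (Some w)))\<^sup>2"
    by (simp add: dist_norm norm3 st_def z w cmod_def a_def b_def add.assoc)
  finally show ?thesis .
qed

lemma cdist_sq_SN: "(cdist (Some z) None)\<^sup>2 = (dist (st (Some z)) (st None))\<^sup>2"
proof -
  obtain x y where z: "z = Complex x y" by (cases z)
  have cz: "(cmod z)\<^sup>2 = x\<^sup>2 + y\<^sup>2" by (simp add: z cmod_def)
  define a where "a = 1 + x\<^sup>2 + y\<^sup>2"
  have A: "a > 0" unfolding a_def by (simp_all add: add_pos_nonneg)
  have "(cdist (Some z) None)\<^sup>2 = 4 / a"
    using A by (simp add: power_divide cz a_def add.assoc)
  also have "\<dots> = (2*x/a)\<^sup>2 + (2*y/a)\<^sup>2 + ((x\<^sup>2+y\<^sup>2-1)/a - 1)\<^sup>2"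
  proof -
    have e: "(x\<^sup>2+y\<^sup>2-1)/a - 1 = -2/a" using A by (simp add: field_simps a_def)
    have "(2*x/a)\<^sup>2 + (2*y/a)\<^sup>2 + (-2/a)\<^sup>2 = 4 * a / a\<^sup>2"
      by (simp add: power_divide a_def add_divide_distrib[symmetric] algebra_simps)
    also have "\<dots> = 4 / a" using A by (simp add: power2_eq_square)
    finally show ?thesis using e by simp
  qed
  also have "\<dots> = (dist (st (Some z)) (st None))\<^sup>2"
    by (simp add: dist_norm norm3 st_def z cmod_def a_def add.assoc)
  finally show ?thesis .
qed

lemma cdist_sym: "cdist p q = cdist q p"
  by (cases p; cases q) (auto simp: norm_minus_commute mult.commute)

lemma cdist_nonneg: "cdist p q \<ge> 0"
  by (cases p; cases q) auto

lemma cdist_dist: "cdist p q = dist (st p) (st q)"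
proof -
  have "(cdist p q)\<^sup>2 = (dist (st p) (st q))\<^sup>2"
  proof (cases p; cases q)
    fix z w assume "p = Some z" "q = Some w" thus ?thesis using cdist_sq_SS by simp
  next
    fix z assume "p = Some z" "q = None" thus ?thesis using cdist_sq_SN by simp
  next
    fix w assume "p = None" "q = Some w" thus ?thesis using cdist_sq_SN[of w]
      by (simp add: dist_commute)
  qed (simp add: st_def)
  thus ?thesis using cdist_nonneg[of p q] by (simp add: power2_eq_iff_nonneg)
qed

lemma cdist_triangle: "cdist p r \<le> cdist p q + cdist q r"
  unfolding cdist_dist by (rule dist_triangle)

lemma cdist_self[simp]: "cdist p p = 0"
  by (cases p) auto

lemma pos1: "1 + (cmod a)\<^sup>2 > 0"
  by (simp add: add_pos_nonneg)

lemma cdist_eq0: "cdist p q = 0 \<longleftrightarrow> p = q"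
  using pos1 by (cases p; cases q) (auto simp: pos1 less_imp_neq[OF pos1, symmetric])

lemma norm_st: "norm (st p) = 1"
proof (cases p)
  case (Some z)
  obtain x y where z: "z = Complex x y" by (cases z)
  define a where "a = 1 + x\<^sup>2 + y\<^sup>2"
  have A: "a > 0" unfolding a_def by (simp_all add: add_pos_nonneg)
  have "(2*x/a)\<^sup>2 + (2*y/a)\<^sup>2 + ((x\<^sup>2+y\<^sup>2-1)/a)\<^sup>2 = ((2*x)\<^sup>2 + (2*y)\<^sup>2 + (x\<^sup>2+y\<^sup>2-1)\<^sup>2) / a\<^sup>2"
    by (simp add: power_divide add_divide_distrib)
  also have "(2*x)\<^sup>2 + (2*y)\<^sup>2 + (x\<^sup>2+y\<^sup>2-1)\<^sup>2 = a\<^sup>2" unfolding a_def by algebra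
  finally have "(2*x/a)\<^sup>2 + (2*y/a)\<^sup>2 + ((x\<^sup>2+y\<^sup>2-1)/a)\<^sup>2 = 1" using A by simp
  thus ?thesis by (simp add: Some z norm3 st_def cmod_def a_def add.assoc)
qed (simp add: st_def)

lemma cdist_le2: "cdist p q \<le> 2"
proof -
  have "dist (st p) (st q) \<le> norm (st p) + norm (st q)"
    by (simp add: dist_norm norm_triangle_ineq4)
  thus ?thesis by (simp add: cdist_dist norm_st)
qed

fun hv :: "ecomplex \<Rightarrow> complex \<times> complex" where
  "hv (Some z) = (z, 1)" | "hv None = (1, 0)"

fun hom :: "complex \<times> complex \<Rightarrow> ecomplex" where
  "hom (a, b) = (if b = 0 then None else Some (a / b))"

fun br :: "complex \<times> complex \<Rightarrow> complex \<times> complex \<Rightarrow> complex" where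
  "br (a, b) (c, d) = a * d - b * c"

fun hn :: "complex \<times> complex \<Rightarrow> real" where
  "hn (a, b) = sqrt ((cmod b)\<^sup>2 + (cmod a)\<^sup>2)"

fun sc :: "complex \<Rightarrow> complex \<times> complex \<Rightarrow> complex \<times> complex" where
  "sc k (a, b) = (k * a, k * b)"

fun mv :: "complex \<Rightarrow> complex \<Rightarrow> complex \<Rightarrow> complex \<Rightarrow> complex \<times> complex \<Rightarrow> complex \<times> complex" where
  "mv a b c d (x, y) = (a * x + b * y, c * x + d * y)"

lemma vec_nz: "hv p \<noteq> (0, 0)"
  by (cases p) auto

lemma hom_vec[simp]: "hom (hv p) = p"
  by (cases p) auto

lemma hn_pos: "u \<noteq> (0,0) \<Longrightarrow> hn u > 0"
  by (cases u) (auto simp: add_pos_nonneg add_nonneg_pos)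

lemma cdist_vec: "cdist p q = 2 * cmod (br (hv p) (hv q)) / (hn (hv p) * hn (hv q))"
  by (cases p; cases q) (auto simp: real_sqrt_mult)

lemma br_sc: "br (sc k u) (sc l w) = k * l * br u w"
  by (cases u; cases w) (simp add: algebra_simps)

lemma hn_sc: "hn (sc k u) = cmod k * hn u"
  by (cases u) (simp add: norm_mult power_mult_distrib distrib_left[symmetric] real_sqrt_mult)

lemma hom_sc: "k \<noteq> 0 \<Longrightarrow> hom (sc k u) = hom u"
  by (cases u) auto

lemma vec_hom: "u \<noteq> (0,0) \<Longrightarrow> \<exists>k. k \<noteq> 0 \<and> u = sc k (hv (hom u))"
proof (cases u)
  case (Pair a b)
  assume nz: "u \<noteq> (0,0)"
  show ?thesis
  proof (cases "b = 0")
    case True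
    then show ?thesis using nz Pair by (intro exI[of _ a]) auto
  next
    case False
    then show ?thesis using Pair by (intro exI[of _ b]) auto
  qed
qed

lemma cdist_hom: "u \<noteq> (0,0) \<Longrightarrow> w \<noteq> (0,0) \<Longrightarrow>
   cdist (hom u) (hom w) = 2 * cmod (br u w) / (hn u * hn w)"
proof -
  assume u: "u \<noteq> (0,0)" and w: "w \<noteq> (0,0)"
  obtain k where k: "k \<noteq> 0" "u = sc k (hv (hom u))" using vec_hom[OF u] by blast
  obtain l where l: "l \<noteq> 0" "w = sc l (hv (hom w))" using vec_hom[OF w] by blast
  define p where "p = hom u"
  define q where "q = hom w"
  have u': "u = sc k (hv p)" using k p_def by simp
  have w': "w = sc l (hv q)" using l q_def by simp
  have "cdist p q = 2 * cmod (br u w) / (hn u * hn w)"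
    unfolding u' w' using k(1) l(1) by (simp add: br_sc hn_sc norm_mult cdist_vec)
  thus ?thesis by (simp add: p_def q_def)
qed

lemma br_mv: "br (mv a b c d u) (mv a b c d w) = (a * d - b * c) * br u w"
  by (cases u; cases w) (simp add: algebra_simps)

lemma mv_nz: "a * d - b * c \<noteq> 0 \<Longrightarrow> u \<noteq> (0,0) \<Longrightarrow> mv a b c d u \<noteq> (0,0)"
proof (cases u)
  case (Pair x y)
  assume D: "a * d - b * c \<noteq> 0" and nz: "u \<noteq> (0,0)"
  show ?thesis
  proof
    assume h: "mv a b c d u = (0,0)"
    hence "a*x + b*y = 0" "c*x+d*y = 0" using Pair by auto
    moreover have "(a*d - b*c) * x = d*(a*x+b*y) - b*(c*x+d*y)" "(a*d - b*c) * y = a*(c*x+d*y) - c*(a*x+b*y)"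
      by (simp_all add: algebra_simps)
    ultimately have "(a*d - b*c) * x = 0" "(a*d - b*c) * y = 0" by simp_all
    thus False using D nz Pair by auto
  qed
qed

lemma moeb_hom: "moeb a b c d p = hom (mv a b c d (hv p))"
  by (cases p) (auto simp: moeb_def)


lemma cross_moeb:
  assumes D: "a * d - b * c \<noteq> 0" and f: "f = moeb a b c d"
  shows "cdist (f p1) (f p2) * cdist (f p3) (f p4) * cdist p1 p4 * cdist p3 p2 =
         cdist p1 p2 * cdist p3 p4 * cdist (f p1) (f p4) * cdist (f p3) (f p2)"
proof -
  have cf: "cdist (f p) (f q) = 2 * cmod (a * d - b * c) * cmod (br (hv p) (hv q)) /
      (hn (mv a b c d (hv p)) * hn (mv a b c d (hv q)))" for p q
    unfolding f moeb_hom
    by (simp add: cdist_hom mv_nz[OF D] vec_nz br_mv norm_mult)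
  have h1: "hn (hv p) \<noteq> 0" for p using hn_pos[OF vec_nz[of p]] by simp
  have h2: "hn (mv a b c d (hv p)) \<noteq> 0" for p using hn_pos[OF mv_nz[OF D vec_nz[of p]]] by simp
  show ?thesis unfolding cf unfolding cdist_vec
    by (simp add: field_simps h1 h2)
qed

lemma mv_sc: "mv a b c d (sc k u) = sc k (mv a b c d u)"
  by (cases u) (simp add: algebra_simps)

lemma mv_mv: "mv a b c d (mv a' b' c' d' u) =
   mv (a*a' + b*c') (a*b' + b*d') (c*a' + d*c') (c*b' + d*d') u"
  by (cases u) (simp add: algebra_simps)

lemma moeb_comp_eq:
  assumes "a' * d' - b' * c' \<noteq> 0"
  shows "moeb a b c d (moeb a' b' c' d' p) =
    moeb (a*a' + b*c') (a*b' + b*d') (c*a' + d*c') (c*b' + d*d') p"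
proof -
  define w where "w = mv a' b' c' d' (hv p)"
  have w: "w \<noteq> (0,0)" unfolding w_def using mv_nz[OF assms vec_nz] .
  obtain k where k: "k \<noteq> 0" "w = sc k (hv (hom w))" using vec_hom[OF w] by blast
  define q where "q = hom w"
  have w': "w = sc k (hv q)" using k q_def by simp
  have "moeb a b c d q = hom (mv a b c d (hv q))" by (simp add: moeb_hom)
  also have "\<dots> = hom (mv a b c d w)" unfolding w' mv_sc hom_sc[OF k(1)] ..
  also have "\<dots> = moeb (a*a' + b*c') (a*b' + b*d') (c*a' + d*c') (c*b' + d*d') p"
    by (simp add: w_def mv_mv moeb_hom)
  finally show ?thesis by (simp add: q_def w_def moeb_hom)
qed

lemma moeb_scalar: "k \<noteq> 0 \<Longrightarrow> moeb k 0 0 k p = p"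
  by (cases p) (auto simp: moeb_def)

lemma is_moebius_comp:
  assumes "is_moebius f" "is_moebius g" shows "is_moebius (f \<circ> g)"
proof -
  obtain a b c d where f: "a * d - b * c \<noteq> 0" "f = moeb a b c d" using assms(1) is_moebius_def by blast
  obtain a' b' c' d' where g: "a' * d' - b' * c' \<noteq> 0" "g = moeb a' b' c' d'" using assms(2) is_moebius_def by blast
  have "(a*a' + b*c') * (c*b' + d*d') - (a*b' + b*d') * (c*a' + d*c') = (a*d - b*c) * (a'*d' - b'*c')"
    by (simp add: algebra_simps)
  hence "(a*a' + b*c') * (c*b' + d*d') - (a*b' + b*d') * (c*a' + d*c') \<noteq> 0" using f g by simp
  moreover have "f \<circ> g = moeb (a*a' + b*c') (a*b' + b*d') (c*a' + d*c') (c*b' + d*d')"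
    using f g by (auto simp: moeb_comp_eq)
  ultimately show ?thesis unfolding is_moebius_def by blast
qed

lemma is_moebius_inv:
  assumes "is_moebius f"
  shows "\<exists>g. is_moebius g \<and> (\<forall>p. g (f p) = p) \<and> (\<forall>p. f (g p) = p)"
proof -
  obtain a b c d where f: "a * d - b * c \<noteq> 0" "f = moeb a b c d" using assms is_moebius_def by blast
  have g: "d * a - (-b) * (-c) \<noteq> 0" using f by (simp add: algebra_simps)
  have 1: "moeb d (-b) (-c) a (f p) = p" for p
    unfolding f(2) moeb_comp_eq[OF f(1)]
    using moeb_scalar[of "a*d-b*c" p] f(1) by (simp add: algebra_simps)
  have 2: "f (moeb d (-b) (-c) a p) = p" for p
    unfolding f(2) moeb_comp_eq[OF g]
    using moeb_scalar[of "a*d-b*c" p] f(1) by (simp add: algebra_simps)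
  show ?thesis using 1 2 g unfolding is_moebius_def by blast
qed

lemma cross_is_moebius:
  assumes "is_moebius f"
  shows "cdist (f p1) (f p2) * cdist (f p3) (f p4) * cdist p1 p4 * cdist p3 p2 =
         cdist p1 p2 * cdist p3 p4 * cdist (f p1) (f p4) * cdist (f p3) (f p2)"
  using assms cross_moeb unfolding is_moebius_def by blast




lemma conv_ev: "conv_sphere s l \<Longrightarrow> e > 0 \<Longrightarrow> eventually (\<lambda>n. cdist (s n) l < e) sequentially"
  unfolding conv_sphere_def eventually_sequentially by blast

lemma prod_bound:
  fixes A B C D k r m :: real
  assumes "A \<ge> 0" "B \<ge> k/2" "C \<ge> r/2" "D \<ge> m/2" "k > 0" "r > 0" "m > 0"
    and "A * B * C * D \<le> S"
  shows "A \<le> 8 * S / (k * r * m)"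
proof -
  have "(k/2) * (r/2) \<le> B * C" using assms by (intro mult_mono) auto
  hence "(k/2) * (r/2) * (m/2) \<le> B * C * D" using assms by (intro mult_mono) auto
  hence "A * ((k/2) * (r/2) * (m/2)) \<le> A * (B * C * D)" using assms(1) by (rule mult_left_mono)
  hence "A * (k * r * m) \<le> 8 * S" using assms(8) by (simp add: algebra_simps)
  thus ?thesis using assms(5-7) by (simp add: field_simps)
qed

lemma key_conv:
  fixes \<psi> :: "nat \<Rightarrow> ecomplex \<Rightarrow> ecomplex"
  assumes mo: "\<And>n. is_moebius (\<psi> n)"
    and cp: "conv_sphere pn p" and cq: "conv_sphere qn q" and cr: "conv_sphere rn r"
    and pq: "p \<noteq> q"
    and cP: "conv_sphere (\<lambda>n. \<psi> n (pn n)) c" and cQ: "conv_sphere (\<lambda>n. \<psi> n (qn n)) c"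
    and cR: "conv_sphere (\<lambda>n. \<psi> n (rn n)) R" and Rc: "R \<noteq> c"
  shows "loc_unif_conv_const \<psi> (UNIV - {r}) c"
  unfolding loc_unif_conv_const_def
proof (intro ballI)
  fix z assume "z \<in> UNIV - {r}"
  hence zr: "z \<noteq> r" by simp
  define \<rho> where "\<rho> = cdist z r / 2"
  have \<rho>: "\<rho> > 0" unfolding \<rho>_def using zr cdist_eq0[of z r] cdist_nonneg[of z r] by simp
  define \<mu> where "\<mu> = cdist p q"
  have \<mu>: "\<mu> > 0" unfolding \<mu>_def using pq cdist_eq0[of p q] cdist_nonneg[of p q] by simp
  define \<kappa> where "\<kappa> = cdist c R"
  have \<kappa>: "\<kappa> > 0" unfolding \<kappa>_def using Rc cdist_eq0[of c R] cdist_nonneg[of c R] by auto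
  show "\<exists>r'>0. \<forall>e>0. \<exists>N. \<forall>n\<ge>N. \<forall>w\<in>UNIV - {r}. cdist w z < r' \<longrightarrow> cdist (\<psi> n w) c < e"
  proof (intro exI[of _ \<rho>] conjI allI impI \<rho>)
    fix e :: real assume e: "e > 0"
    define K where "K = 128 / (\<kappa> * \<rho> * \<mu>)"
    have K: "K > 0" unfolding K_def using \<kappa> \<rho> \<mu> by simp
    define \<eta> where "\<eta> = min (\<kappa>/4) (e / (2 * (1 + K)))"
    have \<eta>: "\<eta> > 0" unfolding \<eta>_def using \<kappa> e K by simp
    have \<eta>1: "\<eta> \<le> \<kappa>/4" unfolding \<eta>_def by (rule min.cobounded1)
    have \<eta>2: "\<eta> * (1 + K) < e"
    proof -
      have "\<eta> * (1 + K) \<le> e / (2 * (1 + K)) * (1 + K)"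
        unfolding \<eta>_def using K by (intro mult_right_mono) auto
      also have "\<dots> = e / 2" using K by (simp add: field_simps)
      finally show ?thesis using e by simp
    qed
    have ev: "eventually (\<lambda>n. cdist (rn n) r < \<rho>/2 \<and> cdist (pn n) p < \<mu>/4 \<and> cdist (qn n) q < \<mu>/4
        \<and> cdist (\<psi> n (pn n)) c < \<eta> \<and> cdist (\<psi> n (qn n)) c < \<eta> \<and> cdist (\<psi> n (rn n)) R < \<kappa>/4) sequentially"
      by (intro eventually_conj conv_ev[OF cr] conv_ev[OF cp] conv_ev[OF cq] conv_ev[OF cP] conv_ev[OF cQ] conv_ev[OF cR])
        (simp_all add: \<rho> \<mu> \<kappa> \<eta>)
    then obtain N where N: "\<And>n. n \<ge> N \<Longrightarrow> cdist (rn n) r < \<rho>/2 \<and> cdist (pn n) p < \<mu>/4 \<and> cdist (qn n) q < \<mu>/4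
        \<and> cdist (\<psi> n (pn n)) c < \<eta> \<and> cdist (\<psi> n (qn n)) c < \<eta> \<and> cdist (\<psi> n (rn n)) R < \<kappa>/4"
      unfolding eventually_sequentially by blast
    show "\<exists>N. \<forall>n\<ge>N. \<forall>w\<in>UNIV - {r}. cdist w z < \<rho> \<longrightarrow> cdist (\<psi> n w) c < e"
    proof (intro exI[of _ N] allI impI ballI)
      fix n w assume n: "n \<ge> N" and wz: "cdist w z < \<rho>"
      note Nn = N[OF n]
      let ?P = "\<psi> n (pn n)" and ?Q = "\<psi> n (qn n)" and ?R = "\<psi> n (rn n)"
      have t1: "cdist z r \<le> cdist z w + cdist w r" by (rule cdist_triangle)
      have t2: "cdist w r \<le> cdist w (rn n) + cdist (rn n) r" by (rule cdist_triangle)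
      have C: "cdist w (rn n) \<ge> \<rho>/2" using t1 t2 wz Nn cdist_sym[of z w] unfolding \<rho>_def by linarith
      have t3: "cdist p q \<le> cdist p (pn n) + cdist (pn n) q" by (rule cdist_triangle)
      have t4: "cdist (pn n) q \<le> cdist (pn n) (qn n) + cdist (qn n) q" by (rule cdist_triangle)
      have D: "cdist (qn n) (pn n) \<ge> \<mu>/2" using t3 t4 Nn cdist_sym[of p "pn n"] cdist_sym[of "pn n" "qn n"]
        unfolding \<mu>_def by linarith
      have t5: "cdist c R \<le> cdist c ?Q + cdist ?Q R" by (rule cdist_triangle)
      have t6: "cdist ?Q R \<le> cdist ?Q ?R + cdist ?R R" by (rule cdist_triangle)
      have B: "cdist ?Q ?R \<ge> \<kappa>/2" using t5 t6 Nn \<eta>1 cdist_sym[of c ?Q] unfolding \<kappa>_def by linarith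
      have t7: "cdist ?Q ?P \<le> cdist ?Q c + cdist c ?P" by (rule cdist_triangle)
      have QP: "cdist ?Q ?P \<le> 2 * \<eta>" using t7 Nn cdist_sym[of c ?P] by linarith
      have cross: "cdist (\<psi> n w) ?P * cdist ?Q ?R * cdist w (rn n) * cdist (qn n) (pn n) =
         cdist w (pn n) * cdist (qn n) (rn n) * cdist (\<psi> n w) ?R * cdist ?Q ?P"
        by (rule cross_is_moebius[OF mo])
      have "cdist w (pn n) * cdist (qn n) (rn n) * cdist (\<psi> n w) ?R * cdist ?Q ?P \<le> 2 * 2 * 2 * (2 * \<eta>)"
        using cdist_le2 cdist_nonneg QP by (intro mult_mono) auto
      hence A: "cdist (\<psi> n w) ?P \<le> 8 * (16 * \<eta>) / (\<kappa> * \<rho> * \<mu>)"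
        using cross by (intro prod_bound[OF cdist_nonneg B C D \<kappa> \<rho> \<mu>]) simp
      have "8 * (16 * \<eta>) / (\<kappa> * \<rho> * \<mu>) = \<eta> * K" unfolding K_def by simp
      hence A': "cdist (\<psi> n w) ?P \<le> \<eta> * K" using A by simp
      have "cdist (\<psi> n w) c \<le> cdist (\<psi> n w) ?P + cdist ?P c" by (rule cdist_triangle)
      also have "\<dots> < \<eta> * K + \<eta>" using A' Nn by linarith
      also have "\<dots> = \<eta> * (1 + K)" by (simp add: algebra_simps)
      finally show "cdist (\<psi> n w) c < e" using \<eta>2 by linarith
    qed
  qed
qed




abbreviation FE :: "'v set set \<Rightarrow> 'v \<Rightarrow> 'v set set" where
  "FE E v \<equiv> {f \<in> E. v \<notin> f}"

lemma tree_edge: "is_tree V E \<Longrightarrow> e \<in> E \<Longrightarrow> \<exists>a b. a \<noteq> b \<and> a \<in> V \<and> b \<in> V \<and> e = {a, b}"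
  unfolding is_tree_def by blast

lemma edge_at_form: "is_tree V E \<Longrightarrow> e \<in> E \<Longrightarrow> v \<in> e \<Longrightarrow> \<exists>u. u \<noteq> v \<and> u \<in> V \<and> e = {v, u}"
  by (drule (1) tree_edge) auto

lemma edge_rel_iff[simp]: "(a, b) \<in> edge_rel F \<longleftrightarrow> {a, b} \<in> F"
  unfolding edge_rel_def by simp

lemma branch_nv: "w \<in> branch E v e \<Longrightarrow> w \<noteq> v"
  unfolding branch_def
proof (elim CollectE bexE conjE)
  fix u assume a: "u \<noteq> v" and b: "(u, w) \<in> (edge_rel (FE E v))\<^sup>*"
  from b show "w \<noteq> v" by (cases rule: rtranclE) (use a in auto)
qed

lemma branch_ext: "a \<in> branch E v e \<Longrightarrow> (a, b) \<in> (edge_rel (FE E v))\<^sup>* \<Longrightarrow> b \<in> branch E v e"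
  unfolding branch_def by (auto intro: rtrancl_trans)

lemma branch_self: "u \<in> e \<Longrightarrow> u \<noteq> v \<Longrightarrow> u \<in> branch E v e"
  unfolding branch_def by auto

lemma edge_rel_sym: "sym (edge_rel F)"
  unfolding sym_def edge_rel_def by (auto simp: insert_commute)

lemma branch_exists:
  assumes T: "is_tree V E" and v: "v \<in> V" and w: "w \<in> V" and wv: "w \<noteq> v"
  shows "\<exists>e\<in>edges_at E v. w \<in> branch E v e"
proof -
  have "(v, w) \<in> (edge_rel E)\<^sup>*" using T v w unfolding is_tree_def by blast
  hence "w = v \<or> (\<exists>e\<in>edges_at E v. w \<in> branch E v e)"
  proof (induction rule: rtrancl_induct)
    case base thus ?case by simp
  next
    case (step y z)
    have yz: "{y, z} \<in> E" using step.hyps(2) by simp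
    show ?case
    proof (cases "z = v")
      case True thus ?thesis by simp
    next
      case zv: False
      from step.IH show ?thesis
      proof
        assume "y = v"
        hence "{v, z} \<in> edges_at E v" using yz unfolding edges_at_def by simp
        moreover have "z \<in> branch E v {v, z}" using zv by (intro branch_self) auto
        ultimately show ?thesis by blast
      next
        assume "\<exists>e\<in>edges_at E v. y \<in> branch E v e"
        then obtain e where e: "e \<in> edges_at E v" "y \<in> branch E v e" by blast
        have "y \<noteq> v" using branch_nv[OF e(2)] .
        hence "(y, z) \<in> edge_rel (FE E v)" using yz zv by simp
        hence "z \<in> branch E v e" using branch_ext[OF e(2)] by blast
        thus ?thesis using e(1) by blast
      qed
    qed
  qed
  thus ?thesis using wv by simp
qed

lemma cycle_from_list:
  assumes "distinct L" "length L \<ge> 3" "\<And>k. Suc k < length L \<Longrightarrow> {L ! k, L ! Suc k} \<in> E"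
    and "{last L, hd L} \<in> E"
  shows "has_cycle E"
  unfolding has_cycle_def
proof (intro exI[of _ L] conjI allI impI assms(1,2))
  fix k assume k: "k < length L"
  show "{L ! k, L ! ((k + 1) mod length L)} \<in> E"
  proof (cases "Suc k < length L")
    case True thus ?thesis using assms(3) by simp
  next
    case False
    hence "k = length L - 1" "Suc k = length L" using k by auto
    moreover have "L \<noteq> []" using assms(2) by auto
    ultimately show ?thesis using assms(4) by (simp add: last_conv_nth hd_conv_nth)
  qed
qed

lemma rtrancl_path_nth_edge:
  assumes "rtrancl_path r x ys y" "Suc k < length (x # ys)"
  shows "r ((x # ys) ! k) ((x # ys) ! Suc k)"
  using rtrancl_path_nth[OF assms(1), of k] assms(2) by simp

lemma branch_unique:
  assumes T: "is_tree V E"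
    and e1: "e1 \<in> edges_at E v" and e2: "e2 \<in> edges_at E v"
    and w1: "w \<in> branch E v e1" and w2: "w \<in> branch E v e2"
  shows "e1 = e2"
proof -
  let ?R = "edge_rel (FE E v)"
  obtain u1 where u1: "u1 \<in> e1" "u1 \<noteq> v" "(u1, w) \<in> ?R\<^sup>*" using w1 unfolding branch_def by blast
  obtain u2 where u2: "u2 \<in> e2" "u2 \<noteq> v" "(u2, w) \<in> ?R\<^sup>*" using w2 unfolding branch_def by blast
  obtain x1 where x1: "e1 = {v, x1}" "x1 \<noteq> v" using edge_at_form[OF T, of e1 v] e1 unfolding edges_at_def by auto
  obtain x2 where x2: "e2 = {v, x2}" "x2 \<noteq> v" using edge_at_form[OF T, of e2 v] e2 unfolding edges_at_def by auto
  have e1u: "e1 = {v, u1}" using x1 u1 by auto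
  have e2u: "e2 = {v, u2}" using x2 u2 by auto
  show ?thesis
  proof (rule ccontr)
    assume ne: "e1 \<noteq> e2"
    hence u12: "u1 \<noteq> u2" using e1u e2u by auto
    have "(w, u2) \<in> (?R\<inverse>)\<^sup>*" by (rule rtrancl_converseI[OF u2(3)])
    moreover have "?R\<inverse> = ?R" using edge_rel_sym[of "FE E v"] sym_conv_converse_eq by blast
    ultimately have "(w, u2) \<in> ?R\<^sup>*" by simp
    hence "(u1, u2) \<in> ?R\<^sup>*" using u1(3) by (rule rtrancl_trans[rotated])
    moreover have "{(x,y). (x,y) \<in> ?R} = ?R" by auto
    ultimately have "(\<lambda>a b. (a, b) \<in> ?R)\<^sup>*\<^sup>* u1 u2" unfolding rtranclp_rtrancl_eq by simp
    then obtain ys0 where "rtrancl_path (\<lambda>a b. (a, b) \<in> ?R) u1 ys0 u2"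
      unfolding rtranclp_eq_rtrancl_path by blast
    then obtain ys where p: "rtrancl_path (\<lambda>a b. (a, b) \<in> ?R) u1 ys u2" and d: "distinct (u1 # ys)"
      by (rule rtrancl_path_distinct)
    have ysne: "ys \<noteq> []" using p u12 by (cases rule: rtrancl_path.cases) auto
    have vys: "v \<notin> set ys"
    proof
      assume "v \<in> set ys"
      from rtrancl_path_Range[OF p this] obtain a where "(a, v) \<in> ?R" by blast
      thus False by simp
    qed
    define L where "L = v # u1 # ys"
    have dL: "distinct L" unfolding L_def using d vys u1(2) by auto
    have lL: "length L \<ge> 3" unfolding L_def using ysne by (cases ys) auto
    have ch: "{L ! k, L ! Suc k} \<in> E" if k: "Suc k < length L" for k
    proof (cases k)
      case 0 thus ?thesis using e1 e1u unfolding L_def edges_at_def by simp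
    next
      case (Suc j)
      have "Suc j < length (u1 # ys)" using k Suc unfolding L_def by simp
      from rtrancl_path_nth_edge[OF p this] show ?thesis unfolding L_def Suc by simp
    qed
    have "last L = u2" unfolding L_def using rtrancl_path_last[OF p ysne] ysne by simp
    hence cl: "{last L, hd L} \<in> E" using e2 e2u unfolding L_def edges_at_def by (simp add: insert_commute)
    have "has_cycle E" by (rule cycle_from_list[OF dL lL ch cl])
    thus False using T unfolding is_tree_def by blast
  qed
qed

lemma toward_eq:
  assumes T: "is_tree V E" and e: "e \<in> edges_at E v" and w: "w \<in> branch E v e"
  shows "toward E v w = e"
  unfolding toward_def
  by (rule the_equality) (use e w branch_unique[OF T] in blast)+




lemma edge_V: "is_tree V E \<Longrightarrow> e \<in> E \<Longrightarrow> x \<in> e \<Longrightarrow> x \<in> V"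
  using tree_edge by blast

definition lchain :: "'v set set \<Rightarrow> 'v list \<Rightarrow> bool" where
  "lchain E L \<longleftrightarrow> (\<forall>k. Suc k < length L \<longrightarrow> {L ! k, L ! Suc k} \<in> E)"

lemma chain_set:
  assumes T: "is_tree V E" and c: "lchain E L" and l: "length L \<ge> 2"
  shows "set L \<subseteq> V"
proof
  fix x assume "x \<in> set L"
  then obtain k where k: "k < length L" "x = L ! k" by (auto simp: in_set_conv_nth)
  show "x \<in> V"
  proof (cases "Suc k < length L")
    case True
    hence "{L ! k, L ! Suc k} \<in> E" using c unfolding lchain_def by blast
    thus ?thesis using edge_V[OF T] k by blast
  next
    case False
    hence "Suc (k - 1) < length L" "k = Suc (k - 1)" using k l by auto
    hence "{L ! (k - 1), L ! k} \<in> E" using c unfolding lchain_def by metis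
    thus ?thesis using edge_V[OF T] k by blast
  qed
qed

lemma chain_reach:
  assumes c: "lchain E L" and d: "distinct L" and L0: "L ! 0 = v"
  shows "1 \<le> k \<Longrightarrow> k < length L \<Longrightarrow> (L ! 1, L ! k) \<in> (edge_rel (FE E v))\<^sup>*"
proof (induction k)
  case 0 thus ?case by simp
next
  case (Suc k)
  show ?case
  proof (cases "k = 0")
    case True thus ?thesis by simp
  next
    case False
    have e: "{L ! k, L ! Suc k} \<in> E" using c Suc.prems unfolding lchain_def by blast
    have Lne: "L \<noteq> []" "length L > 0" using Suc.prems by auto
    have "L ! k \<noteq> v" "L ! Suc k \<noteq> v"
      using Lne nth_eq_iff_index_eq[OF d, of k 0] nth_eq_iff_index_eq[OF d, of "Suc k" 0] L0 False Suc.prems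
      by auto
    hence "(L ! k, L ! Suc k) \<in> edge_rel (FE E v)" using e by simp
    moreover have "(L ! 1, L ! k) \<in> (edge_rel (FE E v))\<^sup>*" using Suc.IH Suc.prems False by simp
    ultimately show ?thesis by (auto intro: rtrancl_into_rtrancl)
  qed
qed

lemma leaf_in_branch:
  assumes T: "is_tree V E" and e: "e \<in> edges_at E v"
  shows "\<exists>t. t \<in> leaves V E \<and> t \<in> branch E v e"
proof -
  obtain u1 where u1: "u1 \<noteq> v" "u1 \<in> V" "e = {v, u1}"
    using edge_at_form[OF T, of e v] e unfolding edges_at_def by auto
  have eE: "e \<in> E" using e unfolding edges_at_def by simp
  define P where "P = {L. distinct L \<and> length L \<ge> 2 \<and> L ! 0 = v \<and> L ! 1 = u1 \<and> lchain E L}"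
  have fin: "finite V" using T unfolding is_tree_def by blast
  have "P \<subseteq> {L. set L \<subseteq> V \<and> length L \<le> card V}"
  proof
    fix L assume "L \<in> P"
    hence L: "distinct L" "length L \<ge> 2" "lchain E L" unfolding P_def by auto
    have s: "set L \<subseteq> V" by (rule chain_set[OF T L(3) L(2)])
    have "length L = card (set L)" using L(1) by (simp add: distinct_card)
    also have "\<dots> \<le> card V" using s fin by (rule card_mono[rotated])
    finally show "L \<in> {L. set L \<subseteq> V \<and> length L \<le> card V}" using s by simp
  qed
  hence finP: "finite P" using finite_lists_length_le[OF fin] finite_subset by blast
  have base: "[v, u1] \<in> P" unfolding P_def lchain_def using u1 eE by auto
  obtain L where LP: "L \<in> P" and Lmax: "\<And>L'. L' \<in> P \<Longrightarrow> length L' \<le> length L"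
    using finite_has_maximal2[OF finite_imageI[OF finP, of length], of "length [v, u1]"] base
    by (metis (no_types, lifting) image_iff nle_le)
  have dL: "distinct L" and lL: "length L \<ge> 2" and L0: "L ! 0 = v" and L1: "L ! 1 = u1"
    and cL: "lchain E L" using LP unfolding P_def by auto
  define m where "m = length L"
  define t where "t = L ! (m - 1)"
  have m2: "m \<ge> 2" using lL m_def by simp
  have pe: "{L ! (m - 2), t} \<in> E"
  proof -
    have "Suc (m - 2) < length L" using m2 m_def by simp
    hence "{L ! (m - 2), L ! Suc (m - 2)} \<in> E" using cL unfolding lchain_def by blast
    moreover have "Suc (m - 2) = m - 1" using m2 by simp
    ultimately show ?thesis unfolding t_def by simp
  qed
  have nbr: "s = L ! (m - 2)" if s: "{t, s} \<in> E" "s \<noteq> t" for s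
  proof (cases "s \<in> set L")
    case False
    have "L @ [s] \<in> P"
      unfolding P_def lchain_def
    proof (intro CollectI conjI allI impI)
      show "distinct (L @ [s])" using dL False by simp
      show "2 \<le> length (L @ [s])" using lL by simp
      have Lne: "L \<noteq> []" using lL by auto
      show "(L @ [s]) ! 0 = v" using L0 Lne by (simp add: nth_append)
      show "(L @ [s]) ! 1 = u1" using L1 lL by (simp add: nth_append)
      fix k assume k: "Suc k < length (L @ [s])"
      show "{(L @ [s]) ! k, (L @ [s]) ! Suc k} \<in> E"
      proof (cases "Suc k < length L")
        case True thus ?thesis using cL unfolding lchain_def by (simp add: nth_append)
      next
        case False
        hence "k = m - 1" "Suc k = m" using k m_def by auto
        thus ?thesis using s(1) m_def m2 unfolding t_def by (simp add: nth_append insert_commute)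
      qed
    qed
    hence "length (L @ [s]) \<le> length L" by (rule Lmax)
    thus ?thesis by simp
  next
    case True
    then obtain j where j: "j < m" "s = L ! j" using m_def by (auto simp: in_set_conv_nth)
    have "j \<noteq> m - 1" using s(2) j unfolding t_def by auto
    show ?thesis
    proof (rule ccontr)
      assume "s \<noteq> L ! (m - 2)"
      hence jm: "j < m - 2" using j \<open>j \<noteq> m - 1\<close> by (cases "j = m - 2") auto
      define L' where "L' = drop j L"
      have "has_cycle E"
      proof (rule cycle_from_list)
        show "distinct L'" unfolding L'_def using dL by simp
        show "length L' \<ge> 3" unfolding L'_def using jm m_def by simp
        fix k assume "Suc k < length L'"
        hence "Suc (j + k) < length L" unfolding L'_def by simp
        hence "{L ! (j + k), L ! Suc (j + k)} \<in> E" using cL unfolding lchain_def by blast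
        thus "{L' ! k, L' ! Suc k} \<in> E" unfolding L'_def using jm m_def by simp
      next
        have "L' \<noteq> []" unfolding L'_def using jm m_def by simp
        hence "last L' = t" "hd L' = s" unfolding L'_def t_def using j jm m_def
          by (simp_all add: last_conv_nth hd_conv_nth)
        thus "{last L', hd L'} \<in> E" using s(1) by simp
      qed
      thus False using T unfolding is_tree_def by blast
    qed
  qed
  have tV: "t \<in> V" using chain_set[OF T cL lL] m2 m_def unfolding t_def by auto
  have "edges_at E t = {{L ! (m - 2), t}}"
  proof
    show "{{L ! (m - 2), t}} \<subseteq> edges_at E t" using pe unfolding edges_at_def by simp
    show "edges_at E t \<subseteq> {{L ! (m - 2), t}}"
    proof
      fix f assume f: "f \<in> edges_at E t"
      then obtain s where s: "s \<noteq> t" "f = {t, s}" using edge_at_form[OF T, of f t]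
        unfolding edges_at_def by auto
      have "s = L ! (m - 2)" using nbr s f unfolding edges_at_def by simp
      thus "f \<in> {{L ! (m - 2), t}}" using s by (simp add: insert_commute)
    qed
  qed
  hence "valence E t = 1" unfolding valence_def by simp
  hence tleaf: "t \<in> leaves V E" unfolding leaves_def using tV by simp
  have "(L ! 1, t) \<in> (edge_rel (FE E v))\<^sup>*"
    unfolding t_def using chain_reach[OF cL dL L0, of "m - 1"] m2 m_def by simp
  hence "t \<in> branch E v e" unfolding branch_def using u1 L1 by auto
  thus ?thesis using tleaf by blast
qed




lemma toward_exists:
  assumes T: "is_tree V E" and "v \<in> V" "w \<in> V" "w \<noteq> v"
  shows "toward E v w \<in> edges_at E v \<and> w \<in> branch E v (toward E v w)"
proof -
  obtain e where e: "e \<in> edges_at E v" "w \<in> branch E v e" using branch_exists[OF assms] by blast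
  thus ?thesis using toward_eq[OF T e] by simp
qed

lemma transfer:
  assumes T: "is_tree V E" and v: "v \<in> V" and v': "v' \<in> V" and vv: "v \<noteq> v'"
    and e1: "e1 \<in> edges_at E v" and x: "x \<in> branch E v e1" and ne: "e1 \<noteq> toward E v v'"
  shows "toward E v' x = toward E v' v"
proof -
  have e0: "toward E v v' \<in> edges_at E v" "v' \<in> branch E v (toward E v v')"
    using toward_exists[OF T v v'] vv by auto
  have nb: "w \<noteq> v'" if "w \<in> branch E v e1" for w
    using branch_unique[OF T e1 e0(1) that] e0(2) ne by blast
  obtain u1 where u1: "u1 \<in> e1" "u1 \<noteq> v" "(u1, x) \<in> (edge_rel (FE E v))\<^sup>*"
    using x unfolding branch_def by blast
  have u1b: "u1 \<in> branch E v e1" using branch_self[OF u1(1,2)] .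
  have "(u1, x) \<in> (edge_rel (FE E v'))\<^sup>*"
    using u1(3)
  proof (induction rule: rtrancl_induct)
    case base thus ?case by simp
  next
    case (step y z)
    have yb: "y \<in> branch E v e1" using branch_ext[OF u1b step.hyps(1)] .
    have zb: "z \<in> branch E v e1" using branch_ext[OF yb] step.hyps(2) by blast
    have "(y, z) \<in> edge_rel (FE E v')" using step.hyps(2) nb[OF yb] nb[OF zb] by simp
    thus ?case by (rule rtrancl_into_rtrancl[OF step.IH])
  qed
  moreover have "(v, u1) \<in> edge_rel (FE E v')"
  proof -
    obtain w where w: "w \<noteq> v" "e1 = {v, w}"
      using edge_at_form[OF T, of e1 v] e1 unfolding edges_at_def by auto
    have "e1 = {v, u1}" using w u1 by auto
    thus ?thesis using e1 vv nb[OF u1b] unfolding edges_at_def by auto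
  qed
  ultimately have vx: "(v, x) \<in> (edge_rel (FE E v'))\<^sup>*" by (rule converse_rtrancl_into_rtrancl[rotated])
  have f: "toward E v' v \<in> edges_at E v'" "v \<in> branch E v' (toward E v' v)"
    using toward_exists[OF T v' v] vv by auto
  have "x \<in> branch E v' (toward E v' v)" using branch_ext[OF f(2) vx] .
  thus ?thesis using toward_eq[OF T f(1)] by simp
qed

lemma pick_other:
  assumes "card S \<ge> 3" "e0 \<in> S"
  shows "\<exists>e1 e2. e1 \<in> S \<and> e2 \<in> S \<and> e1 \<noteq> e0 \<and> e2 \<noteq> e0 \<and> e1 \<noteq> e2"
proof -
  have fin: "finite S" using assms(1) by (metis card.infinite not_numeral_le_zero)
  have "card (S - {e0}) \<ge> 2" using assms fin by simp
  hence "S - {e0} \<noteq> {}" by (metis card.empty not_numeral_le_zero)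
  then obtain e1 where e1: "e1 \<in> S - {e0}" by blast
  have "card (S - {e0} - {e1}) \<ge> 1" using \<open>card (S - {e0}) \<ge> 2\<close> e1 fin by simp
  hence "S - {e0} - {e1} \<noteq> {}" by (metis card.empty not_one_le_zero)
  then obtain e2 where e2: "e2 \<in> S - {e0} - {e1}" by blast
  show ?thesis using e1 e2 by blast
qed

lemma comb:
  assumes T: "is_tree V E" and st: "stable_tree V E"
    and v: "v \<in> internal V E" and v': "v' \<in> internal V E" and vv: "v \<noteq> v'"
  shows "\<exists>x y z. x \<in> leaves V E \<and> y \<in> leaves V E \<and> z \<in> leaves V E \<and>
    toward E v x \<in> edges_at E v \<and> toward E v y \<in> edges_at E v \<and> toward E v x \<noteq> toward E v y \<and>
    toward E v z = toward E v v' \<and> toward E v' x = toward E v' v \<and> toward E v' y = toward E v' v \<and>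
    toward E v' z \<in> edges_at E v' \<and> toward E v' v \<in> edges_at E v' \<and> toward E v' z \<noteq> toward E v' v"
proof -
  have vV: "v \<in> V" and v'V: "v' \<in> V" using v v' unfolding internal_def by auto
  have c3: "card (edges_at E v) \<ge> 3" "card (edges_at E v') \<ge> 3"
    using st v v' unfolding stable_tree_def valence_def by auto
  have e0: "toward E v v' \<in> edges_at E v" using toward_exists[OF T vV v'V] vv by auto
  have f0: "toward E v' v \<in> edges_at E v'" using toward_exists[OF T v'V vV] vv by auto
  obtain e1 e2 where e12: "e1 \<in> edges_at E v" "e2 \<in> edges_at E v" "e1 \<noteq> toward E v v'"
    "e2 \<noteq> toward E v v'" "e1 \<noteq> e2" using pick_other[OF c3(1) e0] by blast
  obtain f1 where f1: "f1 \<in> edges_at E v'" "f1 \<noteq> toward E v' v" using pick_other[OF c3(2) f0] by blast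
  obtain x where x: "x \<in> leaves V E" "x \<in> branch E v e1" using leaf_in_branch[OF T e12(1)] by blast
  obtain y where y: "y \<in> leaves V E" "y \<in> branch E v e2" using leaf_in_branch[OF T e12(2)] by blast
  obtain z where z: "z \<in> leaves V E" "z \<in> branch E v' f1" using leaf_in_branch[OF T f1(1)] by blast
  have tx: "toward E v x = e1" using toward_eq[OF T e12(1) x(2)] .
  have ty: "toward E v y = e2" using toward_eq[OF T e12(2) y(2)] .
  have tz: "toward E v' z = f1" using toward_eq[OF T f1(1) z(2)] .
  have "toward E v' x = toward E v' v" using transfer[OF T vV v'V vv e12(1) x(2) e12(3)] .
  moreover have "toward E v' y = toward E v' v" using transfer[OF T vV v'V vv e12(2) y(2) e12(4)] .
  moreover have "toward E v z = toward E v v'" using transfer[OF T v'V vV vv[symmetric] f1(1) z(2) f1(2)] .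
  ultimately show ?thesis using x y z tx ty tz e12 f1 f0 by metis
qed


theorem lemma4p9:
  fixes V :: "'v set" and E :: "'v set set" and X :: "'v set"
    and i :: "'v \<Rightarrow> 'v set \<Rightarrow> ecomplex"
    and xs :: "nat \<Rightarrow> 'v \<Rightarrow> ecomplex"
    and \<phi> :: "nat \<Rightarrow> 'v \<Rightarrow> ecomplex \<Rightarrow> ecomplex"
    and v v' :: 'v
  assumes "proj_tree_of_spheres V E X i"
    and "stable_tree V E"
    and "v \<in> internal V E" and "v' \<in> internal V E" and "v \<noteq> v'"
    and "\<forall>n. marked_sphere X (xs n)"
    and "converges_via V E X i xs \<phi>"
  shows "loc_unif_conv_const (\<lambda>n. \<phi> n v' \<circ> inv (\<phi> n v))
           (UNIV - {iv E i v v'}) (iv E i v' v)"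
proof -
  have T: "is_tree V E" and LX: "leaves V E = X"
    and inj: "\<And>w. w \<in> internal V E \<Longrightarrow> inj_on (i w) (edges_at E w)"
    using assms(1) unfolding proj_tree_of_spheres_def by auto
  have cv: "\<And>w. w \<in> internal V E \<Longrightarrow> (\<forall>n. is_moebius (\<phi> n w)) \<and>
        (\<forall>x\<in>X. conv_sphere (\<lambda>n. \<phi> n w (xs n x)) (iv E i w x))"
    using assms(7) unfolding converges_via_def by blast
  obtain x y z where xyz: "x \<in> leaves V E" "y \<in> leaves V E" "z \<in> leaves V E"
    "toward E v x \<in> edges_at E v" "toward E v y \<in> edges_at E v" "toward E v x \<noteq> toward E v y"
    "toward E v z = toward E v v'" "toward E v' x = toward E v' v" "toward E v' y = toward E v' v"
    "toward E v' z \<in> edges_at E v'" "toward E v' v \<in> edges_at E v'" "toward E v' z \<noteq> toward E v' v"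
    using comb[OF T assms(2-5)] by blast
  have xX: "x \<in> X" "y \<in> X" "z \<in> X" using xyz(1-3) LX by auto
  have mv: "is_moebius (\<phi> n v)" "is_moebius (\<phi> n v')" for n using cv assms(3,4) by auto
  have invf: "inv (\<phi> n v) (\<phi> n v a) = a" for n a
  proof -
    obtain g where g: "\<forall>p. g (\<phi> n v p) = p" using is_moebius_inv[OF mv(1)] by blast
    have "inj (\<phi> n v)" by (metis g injI)
    thus ?thesis by simp
  qed
  have psi_mo: "is_moebius (\<phi> n v' \<circ> inv (\<phi> n v))" for n
  proof -
    obtain g where g: "is_moebius g" "\<forall>p. g (\<phi> n v p) = p" "\<forall>p. \<phi> n v (g p) = p"
      using is_moebius_inv[OF mv(1)] by blast
    have "inv (\<phi> n v) = g"
    proof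
      fix p
      have "inv (\<phi> n v) p = inv (\<phi> n v) (\<phi> n v (g p))" using g(3) by simp
      also have "\<dots> = g p" by (rule invf)
      finally show "inv (\<phi> n v) p = g p" .
    qed
    thus ?thesis using is_moebius_comp[OF mv(2) g(1)] by simp
  qed
  have ps: "(\<phi> n v' \<circ> inv (\<phi> n v)) (\<phi> n v (xs n a)) = \<phi> n v' (xs n a)" for n a
    by (simp add: invf)
  have cvv: "conv_sphere (\<lambda>n. \<phi> n v (xs n a)) (iv E i v a)" if "a \<in> X" for a
    using cv[OF assms(3)] that by blast
  have cvv': "conv_sphere (\<lambda>n. (\<phi> n v' \<circ> inv (\<phi> n v)) (\<phi> n v (xs n a))) (iv E i v' a)" if "a \<in> X" for a
    unfolding ps using cv[OF assms(4)] that by blast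
  have pq: "iv E i v x \<noteq> iv E i v y"
    unfolding iv_def using inj[OF assms(3)] xyz(4-6) by (auto dest: inj_onD)
  have Rc: "iv E i v' z \<noteq> iv E i v' x"
    unfolding iv_def using inj[OF assms(4)] xyz(8,10-12) by (auto dest: inj_onD)
  have r: "iv E i v z = iv E i v v'" unfolding iv_def using xyz(7) by simp
  have c: "iv E i v' x = iv E i v' v" unfolding iv_def using xyz(8) by simp
  have cy: "iv E i v' y = iv E i v' v" unfolding iv_def using xyz(9) by simp
  have "loc_unif_conv_const (\<lambda>n. \<phi> n v' \<circ> inv (\<phi> n v)) (UNIV - {iv E i v z}) (iv E i v' x)"
    by (rule key_conv[OF psi_mo cvv[OF xX(1)] cvv[OF xX(2)] cvv[OF xX(3)] pq cvv'[OF xX(1)] _ cvv'[OF xX(3)] Rc])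
      (use cvv'[OF xX(2)] c cy in simp)
  thus ?thesis using r c by simp
qed

end
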